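(* Let $N\in\mathbb{N}$, $\xi$ a Dirichlet character modulo $N$, $k$ a positive integer with $\xi(-1)=(-1)^k$, and $\{f_n\}_{n\ge1},\{g_n\}_{n\ge1}$ complex sequences with $f_n,g_n=O(n^\sigma)$ for some $\sigma>0$. Suppose that for every $q\in\mathbb{N}$ with $(q,N)=1$, $\Lambda_f(s,c_q)$ and $\Lambda_g(s,c_q)$ continue to entire functions of finite order and satisfy $\Lambda_f(s,c_q)=i^k\xi(q)(Nq^2)^{\frac12-s}\Lambda_g(1-s,c_q)$. Suppose that $f(z)=\sum_{n\ge1}f_ne(nz)$ is not identically $0$. Then for any prime $q\nmid N$ there exists $n\in\mathbb{N}$ with $q\mid n$ such that $f_n\neq0$ or $g_n\ne0$.
   Context: $e(x):=e^{2\pi i x}$; $c_q(n)=\sum_{a \bmod q,\,(a,q)=1}e(an/q)$ is the Ramanujan sum; $\Gamma_\mathbb{C}(s):=2(2\pi)^{-s}\Gamma(s)$; for $\Re(s)>\sigma+1-\frac{k-1}2$, $\Lambda_f(s,c_q)=\Gamma_\mathbb{C}(s+\frac{k-1}2)\sum_{n\ge1}f_nc_q(n)n^{-s-\frac{k-1}2}$ and similarly $\Lambda_g(s,c_q)$ with $g_n$. *)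

theory Defs
  imports "HOL-Analysis.Analysis"
begin

definition e :: "complex \<Rightarrow> complex" where
  "e x = exp (2 * of_real pi * \<i> * x)"

definition dirichlet_character :: "nat \<Rightarrow> (int \<Rightarrow> complex) \<Rightarrow> bool" where
  "dirichlet_character N chi \<longleftrightarrow> N > 0 \<and>
     (\<forall>m n. chi (m * n) = chi m * chi n) \<and>
     (\<forall>n. chi (n + int N) = chi n) \<and>
     (\<forall>n. chi n \<noteq> 0 \<longleftrightarrow> coprime n (int N))"

definition ramanujan_sum :: "nat \<Rightarrow> nat \<Rightarrow> complex" where
  "ramanujan_sum q n = (\<Sum>a\<in>{a. a < q \<and> coprime a q}. e (of_nat a * of_nat n / of_nat q))"

definition Gamma_C :: "complex \<Rightarrow> complex" where
  "Gamma_C s = 2 * (of_real (2 * pi)) powr (- s) * Gamma s"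

text \<open>Lambda_f(s, c_q) given by its Dirichlet series (meaningful for Re s large).\<close>
definition Lambda_series :: "(nat \<Rightarrow> complex) \<Rightarrow> nat \<Rightarrow> nat \<Rightarrow> complex \<Rightarrow> complex" where
  "Lambda_series f k q s = Gamma_C (s + (of_nat k - 1) / 2) *
     (\<Sum>n. f (Suc n) * ramanujan_sum q (Suc n) * of_nat (Suc n) powr (- (s + (of_nat k - 1) / 2)))"

definition entire_finite_order :: "(complex \<Rightarrow> complex) \<Rightarrow> bool" where
  "entire_finite_order F \<longleftrightarrow> F holomorphic_on UNIV \<and>
     (\<exists>\<rho> C. \<forall>s. norm (F s) \<le> C * exp (norm s powr \<rho>))"

end

theory Submission
  imports Defs "HOL-Complex_Analysis.Complex_Analysis"
begin

lemma ram1: "ramanujan_sum 1 n = 1"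
proof -
  have "{a::nat. a < 1 \<and> coprime a 1} = {0}" by auto
  thus ?thesis by (simp add: ramanujan_sum_def e_def)
qed

lemma ramq:
  assumes q: "prime (q::nat)" and nd: "\<not> q dvd n"
  shows "ramanujan_sum q n = -1"
proof -
  have q1: "q > 1" using q prime_gt_1_nat by blast
  have S: "{a. a < q \<and> coprime a q} = {1..<q}"
  proof safe
    fix a assume "a < q" "coprime a q"
    thus "a \<in> {1..<q}" using q1 by (cases "a = 0") auto
  next
    fix a assume "a \<in> {1..<q}"
    hence "\<not> q dvd a" by (auto dest: dvd_imp_le)
    thus "coprime a q" using q by (metis coprime_commute prime_imp_coprime)
  qed auto
  define z where "z = e (of_nat n / of_nat q)"
  have ez: "e (of_nat a * of_nat n / of_nat q) = z ^ a" for a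
  proof -
    have "e (of_nat a * of_nat n / of_nat q) = exp (of_nat a * (2 * of_real pi * \<i> * (of_nat n / of_nat q)))"
      unfolding e_def by (rule arg_cong[where f=exp]) (simp add: field_simps)
    also have "\<dots> = z ^ a" unfolding z_def e_def by (rule exp_of_nat_mult)
    finally show ?thesis .
  qed
  have zq: "z ^ q = 1"
  proof -
    have "z ^ q = exp (of_nat q * (2 * of_real pi * \<i> * (of_nat n / of_nat q)))"
      unfolding z_def e_def by (rule exp_of_nat_mult[symmetric])
    also have "\<dots> = exp (2 * of_real pi * \<i> * of_nat n)" using q1 by (intro arg_cong[where f=exp]) (simp add: field_simps)
    also have "\<dots> = 1" by (simp add: exp_eq_1) (metis of_int_of_nat_eq mult.commute)
    finally show ?thesis .
  qed
  have z1: "z \<noteq> 1"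
  proof
    assume "z = 1"
    then obtain m :: int where m: "2 * pi * (real n / real q) = of_int (2 * m) * pi"
      unfolding z_def e_def exp_eq_1 by auto
    hence "real n = real q * of_int m" using q1 by (simp add: field_simps)
    hence "int n = int q * m" by (metis of_int_eq_iff of_int_mult of_int_of_nat_eq)
    hence "int q dvd int n" by simp
    thus False using nd by simp
  qed
  have "ramanujan_sum q n = (\<Sum>a\<in>{1..<q}. z ^ a)"
    unfolding ramanujan_sum_def S using ez by simp
  also have "\<dots> = (\<Sum>a<q. z ^ a) - 1"
  proof -
    have "{..<q} = insert 0 {1..<q}" using q1 by auto
    thus ?thesis by simp
  qed
  also have "(\<Sum>a<q. z ^ a) = 0" using z1 zq by (simp add: sum_gp_strict)
  finally show ?thesis by simp
qed

lemma ev: "eventually (\<lambda>x. (real q ^ 2) powr (c - x) < b) at_top" if "q \<ge> 2" "b > 0" for q :: nat and b c :: real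
proof -
  have Q: "real q ^ 2 > 1" using that by (metis less_1_mult numeral_le_real_of_nat_iff one_less_numeral_iff power2_eq_square semiring_norm(76) order_less_le_trans[of 1 2] of_nat_le_iff)
  have "eventually (\<lambda>x. x > c - log (real q ^ 2) b) at_top" by (rule eventually_gt_at_top)
  thus ?thesis
  proof eventually_elim
    case (elim x)
    thus ?case using Q that by (subst powr_less_iff) auto
  qed
qed


lemma summ_norm:
  fixes a :: "nat \<Rightarrow> complex"
  assumes bd: "\<And>n. n \<ge> 1 \<Longrightarrow> norm (a n) \<le> C * real n powr \<sigma>"
    and x: "x > \<sigma> + 1"
  shows "summable (\<lambda>n. norm (a (Suc n)) * real (Suc n) powr (-x))"
proof (rule summable_comparison_test)
  have "summable (\<lambda>n. real n powr (\<sigma> - x))" using x by (simp add: summable_real_powr_iff)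
  hence "summable (\<lambda>n. real (Suc n) powr (\<sigma> - x))" using summable_Suc_iff[of "\<lambda>n. real n powr (\<sigma> - x)"] by simp
  thus "summable (\<lambda>n. C * real (Suc n) powr (\<sigma> - x))" by (rule summable_mult)
  show "\<exists>N. \<forall>n\<ge>N. norm (norm (a (Suc n)) * real (Suc n) powr (-x)) \<le> C * real (Suc n) powr (\<sigma> - x)"
  proof (intro exI allI impI)
    fix n :: nat
    have "norm (norm (a (Suc n)) * real (Suc n) powr (-x)) = norm (a (Suc n)) * real (Suc n) powr (-x)" by simp
    also have "\<dots> \<le> (C * real (Suc n) powr \<sigma>) * real (Suc n) powr (-x)"
      by (rule mult_right_mono) (use bd[of "Suc n"] in auto)
    also have "\<dots> = C * real (Suc n) powr (\<sigma> - x)" by (simp add: powr_add[symmetric])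
    finally show "norm (norm (a (Suc n)) * real (Suc n) powr (-x)) \<le> C * real (Suc n) powr (\<sigma> - x)" .
  qed
qed

lemma dir_unique:
  fixes a :: "nat \<Rightarrow> complex"
  assumes bd: "\<And>n. n \<ge> 1 \<Longrightarrow> norm (a n) \<le> C * real n powr \<sigma>"
    and X0: "X0 > \<sigma> + 1"
    and Z: "\<And>x. x \<ge> X0 \<Longrightarrow> (\<Sum>n. a (Suc n) * of_real (real (Suc n) powr (-x))) = 0"
  shows "a (Suc m) = 0"
proof (induction m rule: less_induct)
  case (less m)
  define M where "M = real (Suc m)"
  have M0: "M > 0" unfolding M_def by simp
  define K where "K = (\<Sum>n. norm (a (n + Suc (Suc m))) * real (n + Suc (Suc m)) powr (-X0))"
  have key: "norm (a (Suc m)) * M powr (-X0) \<le> K * (M / (M + 1)) ^ j" for j :: nat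
  proof -
    define x where "x = X0 + real j"
    have x: "x > \<sigma> + 1" "x \<ge> X0" using X0 unfolding x_def by auto
    define b where "b n = a (Suc n) * of_real (real (Suc n) powr (-x))" for n
    have nb: "norm (b n) = norm (a (Suc n)) * real (Suc n) powr (-x)" for n
      unfolding b_def by (simp add: norm_mult)
    have sn: "summable (\<lambda>n. norm (b n))" unfolding nb by (rule summ_norm[OF bd x(1)])
    have sb: "summable b" by (rule summable_norm_cancel[OF sn])
    have "0 = suminf b" using Z[OF x(2)] unfolding b_def by simp
    also have "\<dots> = (\<Sum>n. b (n + Suc m)) + (\<Sum>i<Suc m. b i)" by (rule suminf_split_initial_segment[OF sb])
    also have "(\<Sum>i<Suc m. b i) = b m" using less by (simp add: b_def)
    finally have bm: "b m = - (\<Sum>n. b (n + Suc m))" by (simp add: eq_neg_iff_add_eq_0 add.commute)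
    have "summable (\<lambda>n. norm (a (Suc n)) * real (Suc n) powr (-X0))" by (rule summ_norm[OF bd X0])
    from summable_ignore_initial_segment[OF this, of "Suc m"]
    have sK: "summable (\<lambda>n. norm (a (n + Suc (Suc m))) * real (n + Suc (Suc m)) powr (-X0))" by (simp only: add_Suc_right)
    have sn2: "summable (\<lambda>n. norm (b (n + Suc m)))" using summable_ignore_initial_segment[OF sn] .
    have "norm (b m) \<le> (\<Sum>n. norm (b (n + Suc m)))" unfolding bm norm_minus_cancel by (rule summable_norm[OF sn2])
    also have "\<dots> \<le> (\<Sum>n. (M + 1) powr (- real j) * (norm (a (n + Suc (Suc m))) * real (n + Suc (Suc m)) powr (-X0)))"
    proof (rule suminf_le)
      show "summable (\<lambda>n. (M + 1) powr (- real j) * (norm (a (n + Suc (Suc m))) * real (n + Suc (Suc m)) powr (-X0)))"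
        by (rule summable_mult[OF sK])
      show "summable (\<lambda>n. norm (b (n + Suc m)))" by (rule sn2)
      fix n
      have "norm (b (n + Suc m)) = norm (a (n + Suc (Suc m))) * (real (n + Suc (Suc m)) powr (-X0) * real (n + Suc (Suc m)) powr (- real j))"
        unfolding nb x_def by (simp add: powr_add[symmetric])
      also have "\<dots> \<le> norm (a (n + Suc (Suc m))) * (real (n + Suc (Suc m)) powr (-X0) * (M + 1) powr (- real j))"
        by (intro mult_left_mono powr_mono2') (auto simp: M_def)
      finally show "norm (b (n + Suc m)) \<le> (M + 1) powr (- real j) * (norm (a (n + Suc (Suc m))) * real (n + Suc (Suc m)) powr (-X0))"
        by (simp add: mult_ac)
    qed
    also have "\<dots> = (M + 1) powr (- real j) * K" unfolding K_def by (rule suminf_mult[OF sK])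
    finally have c1: "norm (b m) \<le> (M + 1) powr (- real j) * K" .
    have "real (Suc m) powr (-x) = M powr (-X0) * M powr (- real j)"
      unfolding x_def M_def by (simp add: powr_add[symmetric])
    hence "norm (b m) = norm (a (Suc m)) * M powr (-X0) * M powr (- real j)"
      using nb[of m] by simp
    with c1 have c2: "(norm (a (Suc m)) * M powr (-X0)) * M powr (- real j) \<le> (M + 1) powr (- real j) * K" by simp
    have P: "M powr (- real j) > 0" using M0 by simp
    have "norm (a (Suc m)) * M powr (-X0) \<le> (M + 1) powr (- real j) * K / M powr (- real j)"
      using c2 P by (simp add: pos_le_divide_eq)
    moreover have "(M + 1) powr (- real j) / M powr (- real j) = (M / (M + 1)) ^ j"
    proof -
      have "(M + 1) powr (- real j) / M powr (- real j) = inverse ((M+1) ^ j) / inverse (M ^ j)"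
        using M0 by (simp only: powr_minus powr_realpow)
      also have "\<dots> = (M / (M + 1)) ^ j" using M0 by (simp add: power_divide power_mult_distrib power_inverse divide_inverse)
      finally show ?thesis .
    qed
    ultimately show ?thesis by (metis mult.commute times_divide_eq_right)
  qed
  have lim: "(\<lambda>j. K * (M / (M + 1)) ^ j) \<longlonglongrightarrow> 0"
    using M0 by (intro tendsto_mult_right_zero LIMSEQ_power_zero) auto
  have "norm (a (Suc m)) * M powr (-X0) \<le> 0"
    by (rule LIMSEQ_le_const[OF lim]) (use key in auto)
  moreover have "M powr (-X0) > 0" using M0 by simp
  ultimately have "norm (a (Suc m)) \<le> 0" by (simp add: mult_le_0_iff)
  thus ?case by simp
qed


lemma summ_cplx:
  fixes h :: "nat \<Rightarrow> complex"
  assumes bd: "\<And>n. n \<ge> 1 \<Longrightarrow> norm (h n) \<le> C * real n powr \<sigma>"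
    and w: "Re w > \<sigma> + 1"
  shows "summable (\<lambda>n. h (Suc n) * of_nat (Suc n) powr (-w))"
proof (rule summable_norm_cancel)
  have "norm (h (Suc n) * of_nat (Suc n) powr (-w)) = norm (h (Suc n)) * real (Suc n) powr (- Re w)" for n
    by (simp add: norm_mult norm_powr_real_powr)
  thus "summable (\<lambda>n. norm (h (Suc n) * of_nat (Suc n) powr (-w)))"
    using summ_norm[OF bd w] by simp
qed

lemma Lq:
  fixes h :: "nat \<Rightarrow> complex"
  assumes q: "prime q" and bd: "\<And>n. n \<ge> 1 \<Longrightarrow> norm (h n) \<le> C * real n powr \<sigma>"
    and Z: "\<And>n. n \<ge> 1 \<Longrightarrow> q dvd n \<Longrightarrow> h n = 0"
    and s: "Re s > \<sigma> + 1 - (real k - 1) / 2"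
  shows "Lambda_series h k q s = - Lambda_series h k 1 s"
proof -
  define w where "w = s + (of_nat k - 1) / 2"
  have w: "Re w > \<sigma> + 1" using s unfolding w_def by simp
  have t: "h (Suc n) * ramanujan_sum q (Suc n) * of_nat (Suc n) powr (-w) = - (h (Suc n) * of_nat (Suc n) powr (-w))" for n
  proof (cases "q dvd Suc n")
    case True thus ?thesis using Z[of "Suc n"] by simp
  next
    case False thus ?thesis using ramq[OF q False] by simp
  qed
  have "(\<Sum>n. h (Suc n) * ramanujan_sum q (Suc n) * of_nat (Suc n) powr (-w)) = - (\<Sum>n. h (Suc n) * of_nat (Suc n) powr (-w))"
    unfolding t by (rule suminf_minus[OF summ_cplx[OF bd w]])
  thus ?thesis unfolding Lambda_series_def w_def[symmetric] by (simp add: ram1[unfolded One_nat_def])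
qed

lemma ident:
  fixes F G :: "complex \<Rightarrow> complex"
  assumes "F holomorphic_on UNIV" "G holomorphic_on UNIV" "\<And>s. Re s > c \<Longrightarrow> F s = G s"
  shows "F w = G w"
proof -
  have "F w - G w = 0"
  proof (rule analytic_continuation[of "\<lambda>z. F z - G z" UNIV "{s. Re s > c}" "of_real (c + 1)"])
    show "(\<lambda>z. F z - G z) holomorphic_on UNIV" using assms by (intro holomorphic_on_diff)
    have "open {s. Re s > c}" by (rule open_halfspace_Re_gt)
    thus "of_real (c + 1) islimpt {s. Re s > c}"
      by (intro interior_limit_point) (simp add: interior_open)
  qed (use assms in auto)
  thus ?thesis by simp
qed

lemma GammaC_nz: "x > 0 \<Longrightarrow> Gamma_C (of_real x) \<noteq> 0"
proof -
  assume x: "x > 0"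
  have "of_real x \<notin> (\<int>\<^sub>\<le>\<^sub>0 :: complex set)"
  proof
    assume "of_real x \<in> (\<int>\<^sub>\<le>\<^sub>0 :: complex set)"
    then obtain n :: nat where "(of_real x :: complex) = - of_nat n" by (auto elim!: nonpos_Ints_cases')
    hence "x = - real n" by (metis of_real_eq_iff of_real_minus of_real_of_nat_eq)
    thus False using x by simp
  qed
  thus ?thesis unfolding Gamma_C_def using Gamma_nonzero by (simp add: powr_def)
qed


theorem lemma4p6:
  fixes N k :: nat and \<xi> :: "int \<Rightarrow> complex" and f g :: "nat \<Rightarrow> complex" and \<sigma> :: real
  assumes N: "N \<ge> 1"
    and chi: "dirichlet_character N \<xi>"
    and k: "k > 0"
    and parity: "\<xi> (-1) = (-1) ^ k"
    and sigma: "\<sigma> > 0"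
    and f_bound: "\<exists>C. \<forall>n\<ge>1. norm (f n) \<le> C * real n powr \<sigma>"
    and g_bound: "\<exists>C. \<forall>n\<ge>1. norm (g n) \<le> C * real n powr \<sigma>"
    and FE: "\<And>q. q \<ge> 1 \<Longrightarrow> coprime q N \<Longrightarrow>
       \<exists>F G. entire_finite_order F \<and> entire_finite_order G \<and>
         (\<forall>s. Re s > \<sigma> + 1 - (real k - 1) / 2 \<longrightarrow>
               F s = Lambda_series f k q s \<and> G s = Lambda_series g k q s) \<and>
         (\<forall>s. F s = \<i> ^ k * \<xi> (int q) * (of_nat (N * q\<^sup>2)) powr (1/2 - s) * G (1 - s))"
    and nonzero: "\<exists>z. Im z > 0 \<and> (\<Sum>n. f (Suc n) * e (of_nat (Suc n) * z)) \<noteq> 0"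
    and q: "prime (q::nat)" "\<not> q dvd N"
  shows "\<exists>n\<ge>1. q dvd n \<and> (f n \<noteq> 0 \<or> g n \<noteq> 0)"
proof (rule ccontr)
  assume "\<not> ?thesis"
  hence Zf: "\<And>n. n \<ge> 1 \<Longrightarrow> q dvd n \<Longrightarrow> f n = 0"
    and Zg: "\<And>n. n \<ge> 1 \<Longrightarrow> q dvd n \<Longrightarrow> g n = 0" by auto
  obtain Cf where Cf: "\<And>n. n \<ge> 1 \<Longrightarrow> norm (f n) \<le> Cf * real n powr \<sigma>" using f_bound by auto
  obtain Cg where Cg: "\<And>n. n \<ge> 1 \<Longrightarrow> norm (g n) \<le> Cg * real n powr \<sigma>" using g_bound by auto
  define c where "c = \<sigma> + 1 - (real k - 1) / 2"
  have q1: "q \<ge> 2" using q(1) prime_ge_2_nat by blast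
  have copq: "coprime q N" using q by (metis prime_imp_coprime)
  obtain F1 G1 where F1: "entire_finite_order F1" and G1: "entire_finite_order G1"
    and D1: "\<And>s. Re s > c \<Longrightarrow> F1 s = Lambda_series f k 1 s \<and> G1 s = Lambda_series g k 1 s"
    and E1: "\<And>s. F1 s = \<i> ^ k * \<xi> (int 1) * (of_nat (N * 1\<^sup>2)) powr (1/2 - s) * G1 (1 - s)"
    using FE[of 1] unfolding c_def by auto
  obtain Fq Gq where Fq: "entire_finite_order Fq" and Gq: "entire_finite_order Gq"
    and Dq: "\<And>s. Re s > c \<Longrightarrow> Fq s = Lambda_series f k q s \<and> Gq s = Lambda_series g k q s"
    and Eq: "\<And>s. Fq s = \<i> ^ k * \<xi> (int q) * (of_nat (N * q\<^sup>2)) powr (1/2 - s) * Gq (1 - s)"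
    using FE[of q] q1 copq unfolding c_def by auto
  have xi1: "\<xi> 1 = 1"
  proof -
    have "\<xi> 1 = \<xi> 1 * \<xi> 1" using chi unfolding dirichlet_character_def by (metis mult_1)
    moreover have "\<xi> 1 \<noteq> 0" using chi unfolding dirichlet_character_def by simp
    ultimately show ?thesis by simp
  qed
  have FqF1: "Fq s = - F1 s" for s
  proof (rule ident[of Fq "\<lambda>s. - F1 s" c])
    show "Fq holomorphic_on UNIV" using Fq unfolding entire_finite_order_def by simp
    show "(\<lambda>s. - F1 s) holomorphic_on UNIV" using F1 unfolding entire_finite_order_def
      by (intro holomorphic_on_minus) simp
    fix s assume "c < Re s"
    thus "Fq s = - F1 s" using D1 Dq Lq[OF q(1) Cf Zf, where s=s and k=k] unfolding c_def by auto
  qed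
  have GqG1: "Gq s = - G1 s" for s
  proof (rule ident[of Gq "\<lambda>s. - G1 s" c])
    show "Gq holomorphic_on UNIV" using Gq unfolding entire_finite_order_def by simp
    show "(\<lambda>s. - G1 s) holomorphic_on UNIV" using G1 unfolding entire_finite_order_def
      by (intro holomorphic_on_minus) simp
    fix s assume "c < Re s"
    thus "Gq s = - G1 s" using D1 Dq Lq[OF q(1) Cg Zg, where s=s and k=k] unfolding c_def by auto
  qed
  define Q :: complex where "Q = of_nat (q\<^sup>2)"
  have key: "F1 s = \<xi> (int q) * Q powr (1/2 - s) * F1 s" for s
  proof -
    have sp: "(of_nat (N * q\<^sup>2) :: complex) powr (1/2 - s) = of_nat N powr (1/2 - s) * Q powr (1/2 - s)"
      unfolding Q_def of_nat_mult by (rule powr_times_real) auto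
    have "- F1 s = \<i> ^ k * \<xi> (int q) * (of_nat N powr (1/2 - s) * Q powr (1/2 - s)) * (- G1 (1 - s))"
      using Eq[of s] FqF1[of s] GqG1[of "1 - s"] sp by simp
    moreover have "F1 s = \<i> ^ k * of_nat N powr (1/2 - s) * G1 (1 - s)" using E1[of s] xi1 by simp
    ultimately show ?thesis by (simp add: algebra_simps)
  qed
  define b where "b = 1 / (norm (\<xi> (int q)) + 1)"
  have b0: "b > 0" unfolding b_def by (simp add: add_nonneg_pos)
  obtain X1 where X1: "\<And>x. x \<ge> X1 \<Longrightarrow> (real q ^ 2) powr ((1/2 + (real k - 1)/2) - x) < b"
    using ev[OF q1 b0, of "1/2 + (real k - 1)/2"] unfolding eventually_at_top_linorder by auto
  define X0 where "X0 = max X1 (\<sigma> + 2)"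
  have X0: "X0 > \<sigma> + 1" unfolding X0_def by simp
  have Z: "(\<Sum>n. f (Suc n) * of_real (real (Suc n) powr (-x))) = 0" if x: "x \<ge> X0" for x
  proof -
    define s where "s = (of_real (x - (real k - 1)/2) :: complex)"
    have sx: "s + (of_nat k - 1) / 2 = of_real x" unfolding s_def by simp
    have Res: "Re s > c" unfolding s_def c_def using x X0 by simp
    have nQ: "norm (Q powr (1/2 - s)) = (real q ^ 2) powr ((1/2 + (real k - 1)/2) - x)"
      unfolding Q_def s_def by (subst norm_powr_real_powr) (auto simp: algebra_simps)
    have "norm (\<xi> (int q) * Q powr (1/2 - s)) = norm (\<xi> (int q)) * norm (Q powr (1/2 - s))"
      by (simp add: norm_mult)
    also have "\<dots> \<le> norm (\<xi> (int q)) * b"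
      using X1[of x] x unfolding nQ X0_def by (intro mult_left_mono) auto
    also have "\<dots> < 1" unfolding b_def using norm_ge_zero[of "\<xi> (int q)"] by (simp add: divide_less_eq not_less add_nonneg_pos)
    finally have "\<xi> (int q) * Q powr (1/2 - s) \<noteq> 1" by auto
    hence F0: "F1 s = 0" using key[of s]
      by (metis mult_cancel_right1 mult.commute)
    have "F1 s = Gamma_C (of_real x) * (\<Sum>n. f (Suc n) * of_nat (Suc n) powr (- of_real x))"
      using D1[OF Res] unfolding Lambda_series_def sx by (simp add: ram1[unfolded One_nat_def])
    moreover have "Gamma_C (of_real x) \<noteq> 0" using x X0 sigma by (intro GammaC_nz) auto
    ultimately have "(\<Sum>n. f (Suc n) * of_nat (Suc n) powr (- of_real x)) = 0" using F0 by simp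
    moreover have "(of_nat (Suc n) :: complex) powr (- of_real x) = of_real (real (Suc n) powr (-x))" for n
      by (metis of_real_of_nat_eq of_real_minus powr_of_real of_nat_0_le_iff)
    ultimately show ?thesis by simp
  qed
  have f0: "f (Suc m) = 0" for m by (rule dir_unique[OF Cf X0 Z])
  from nonzero obtain z where "(\<Sum>n. f (Suc n) * e (of_nat (Suc n) * z)) \<noteq> 0" by auto
  thus False using f0 by simp
qed

end
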